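(* Assume the linear band crossing and Band Crossing Scenario described in the context, with limit point $(q^*,p^* )$ at time $t^*$. (i) For sufficiently small $\delta'>0$, the system $$\dot q_-=\partial_pE_-(p_-),\quad \dot p_-=-\partial_qW(q_-),\quad q_-(t^* )=q^*,\ p_-(t^* )=p^*$$ has a unique smooth solution $(q_-(t),p_-(t))\in\mathbb R\times U$ on $[t^*-\delta',t^*+\delta']$. (ii) For sufficiently small $T'\ge t^*+\delta'$, there exists a solution $(q_n(t),p_n(t))\in\mathbb R\times\mathcal B$ on $(t^*,T']$ of $$\dot q_n=\partial_pE_n(p_n),\quad \dot p_n=-\partial_qW(q_n)$$ with $\lim_{t\downarrow t^*}(q_n(t),p_n(t))=(q^*,p^* )$ and $G(E_n(p_n(t)))>0$ for all $t\in(t^*,T']$. It satisfies $(q_-(t),p_-(t))=(q_n(t),p_n(t))$ for all $t\in(t^*,t^*+\delta']$. (iii) Consequently, the map $t\mapsto(\mathfrak q_-(t),\mathfrak p_-(t))$ is smooth on $[t^*-\delta',T']$. This map is defined as $(q_-(t),p_-(t))$ on $[t^*-\delta',t^*+\delta']$ and as $(q_n(t),p_n(t))$ on $[t^*+\delta',T']$.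
   Context: **Potentials.** Let $V:\mathbb R\to\mathbb R$ be smooth and $1$-periodic, and let $W:\mathbb R\to\mathbb R$ be smooth with all derivatives bounded. **Bloch bands.** For $p\in\mathbb R$, $H(p):=\frac12(p-i\partial_z)^2+V(z)$ acts on $1$-periodic functions. Its eigenvalues, ordered with multiplicity, are $E_1(p)\le E_2(p)\le\cdots$, with normalized eigenfunctions $\chi_m(z;p)$. The Brillouin zone is $\mathcal B=[0,2\pi]$, and $G(E_m(p)):=\min_{m'\ne m}|E_m(p)-E_{m'}(p)|$. **Linear band crossing.** $U\subset\mathcal B$ is open with $p^*\in U$, and: - (A1) $E_n(p^* )=E_{n+1}(p^* )$, with no other degeneracy of $E_n,E_{n+1}$ in $U$. - (A2) There is $M>0$ with $|E_m-E_{n+1}|,|E_n-E_m|\ge M$ on $\overline U$ for all $m\notin\{n,n+1\}$. - (A3) The maps $(E_+,\chi_+):=(E_n,\chi_n)$ for $p<p^*$ and $(E_{n+1},\chi_{n+1})$ for $p\ge p^*$, and $(E_-,\chi_-):=(E_{n+1},\chi_{n+1})$ for $p<p^*$ and $(E_n,\chi_n)$ for $p\ge p^*$, are smooth on $U$. - (A4) $\partial_pE_+(p^* )>0>\partial_pE_-(p^* )$. **Band Crossing Scenario.** $(q_0,p_0)$ satisfies $G(E_n(p_0))>0$. The system $\dot q=\partial_pE_n(p)$, $\dot p=-\partial_qW(q)$, $(q,p)(0)=(q_0,p_0)$ has a unique smooth solution on $[0,t^* )$ (with $t^*>0$), along which $G(E_n(p(t)))>0$. Moreover $p(t)\to p^*$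 as $t\uparrow t^*$, $q^*:=\lim_{t\uparrow t^*}q(t)$, and $-\partial_qW(q^* )>0$. *)

theory Defs
  imports "HOL-Analysis.Analysis"
begin

text \<open>C-infinity on a set S of reals: there is a family of successive derivatives
  (taken within S, i.e. one-sided at boundary points of an interval).\<close>
definition smooth_on :: "real set \<Rightarrow> (real \<Rightarrow> 'a::real_normed_vector) \<Rightarrow> bool" where
  "smooth_on S f \<longleftrightarrow>
     (\<exists>D :: nat \<Rightarrow> real \<Rightarrow> 'a. (\<forall>x\<in>S. D 0 x = f x) \<and>
        (\<forall>k. \<forall>x\<in>S. (D k has_vector_derivative D (Suc k) x) (at x within S)))"

definition smooth_bounded_derivs :: "(real \<Rightarrow> real) \<Rightarrow> bool" where
  "smooth_bounded_derivs W \<longleftrightarrow>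
     (\<exists>D :: nat \<Rightarrow> real \<Rightarrow> real. D 0 = W \<and>
        (\<forall>k x. (D k has_real_derivative D (Suc k) x) (at x)) \<and>
        (\<forall>k\<ge>1. bounded (range (D k))))"

definition smooth2_on :: "real set \<Rightarrow> real set \<Rightarrow> (real \<Rightarrow> real \<Rightarrow> complex) \<Rightarrow> bool" where
  "smooth2_on A B f \<longleftrightarrow>
     (\<exists>D :: nat \<Rightarrow> nat \<Rightarrow> real \<Rightarrow> real \<Rightarrow> complex.
        (\<forall>z\<in>A. \<forall>p\<in>B. D 0 0 z p = f z p) \<and>
        (\<forall>i j. \<forall>z\<in>A. \<forall>p\<in>B.
            ((\<lambda>z'. D i j z' p) has_vector_derivative D (Suc i) j z p) (at z within A) \<and>
            ((\<lambda>p'. D i j z p') has_vector_derivative D i (Suc j) z p) (at p within B)) \<and>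
        (\<forall>i j. continuous_on (A \<times> B) (\<lambda>(z,p). D i j z p)))"

text \<open>chi is an eigenfunction of H(p) = 1/2 (p - i d/dz)^2 + V(z) on 1-periodic functions,
  with (real) eigenvalue E:  1/2 (p^2 chi - 2 i p chi' - chi'') + V chi = E chi.\<close>
definition bloch_eigenfunction ::
  "(real \<Rightarrow> real) \<Rightarrow> real \<Rightarrow> real \<Rightarrow> (real \<Rightarrow> complex) \<Rightarrow> bool" where
  "bloch_eigenfunction V p E f \<longleftrightarrow>
     (\<exists>z. f z \<noteq> 0) \<and> (\<forall>z. f (z + 1) = f z) \<and>
     (\<exists>f1 f2. \<forall>z. (f has_vector_derivative f1 z) (at z) \<and>
                   (f1 has_vector_derivative f2 z) (at z) \<and>
                   (1/2) * (complex_of_real (p^2) * f z - 2 * \<i> * complex_of_real p * f1 z - f2 z)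
                     + complex_of_real (V z) * f z = complex_of_real E * f z)"

definition normalized_bloch_eigenfunction ::
  "(real \<Rightarrow> real) \<Rightarrow> real \<Rightarrow> real \<Rightarrow> (real \<Rightarrow> complex) \<Rightarrow> bool" where
  "normalized_bloch_eigenfunction V p E f \<longleftrightarrow>
     bloch_eigenfunction V p E f \<and> integral {0..1} (\<lambda>z. (cmod (f z))^2) = 1"

definition lin_indep_funs :: "(real \<Rightarrow> complex) set \<Rightarrow> bool" where
  "lin_indep_funs S \<longleftrightarrow>
     (\<forall>c. (\<forall>z. (\<Sum>f\<in>S. c f * f z) = 0) \<longrightarrow> (\<forall>f\<in>S. c f = 0))"

definition bloch_multiplicity :: "(real \<Rightarrow> real) \<Rightarrow> real \<Rightarrow> real \<Rightarrow> nat" where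
  "bloch_multiplicity V p E =
     Sup {card S | S. finite S \<and> S \<subseteq> {f. bloch_eigenfunction V p E f} \<and> lin_indep_funs S}"

definition bloch_count :: "(real \<Rightarrow> real) \<Rightarrow> real \<Rightarrow> real \<Rightarrow> nat" where
  "bloch_count V p lam =
     (\<Sum>E\<in>{E. E \<le> lam \<and> 0 < bloch_multiplicity V p E}. bloch_multiplicity V p E)"

text \<open>E_m(p), m \<ge> 1: the m-th eigenvalue of H(p), ordered increasingly with multiplicity.\<close>
definition bloch_band :: "(real \<Rightarrow> real) \<Rightarrow> nat \<Rightarrow> real \<Rightarrow> real" where
  "bloch_band V m p = Inf {lam. m \<le> bloch_count V p lam}"

definition bloch_gap :: "(real \<Rightarrow> real) \<Rightarrow> nat \<Rightarrow> real \<Rightarrow> real" where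
  "bloch_gap V m p = Inf {\<bar>bloch_band V m p - bloch_band V m' p\<bar> | m'. 1 \<le> m' \<and> m' \<noteq> m}"

definition E_plus :: "(real \<Rightarrow> real) \<Rightarrow> nat \<Rightarrow> real \<Rightarrow> real \<Rightarrow> real" where
  "E_plus V n ps p = (if p < ps then bloch_band V n p else bloch_band V (Suc n) p)"

definition E_minus :: "(real \<Rightarrow> real) \<Rightarrow> nat \<Rightarrow> real \<Rightarrow> real \<Rightarrow> real" where
  "E_minus V n ps p = (if p < ps then bloch_band V (Suc n) p else bloch_band V n p)"

definition ham_sol :: "(real \<Rightarrow> real) \<Rightarrow> (real \<Rightarrow> real) \<Rightarrow> real set \<Rightarrow>
    (real \<Rightarrow> real) \<Rightarrow> (real \<Rightarrow> real) \<Rightarrow> bool" where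
  "ham_sol E W S q p \<longleftrightarrow>
     (\<forall>t\<in>S. (q has_real_derivative deriv E (p t)) (at t within S) \<and>
            (p has_real_derivative - deriv W (q t)) (at t within S))"

end

theory Submission
  imports Defs
begin


datatype ex = Qv | Pv | Av nat | Bv nat | Add ex ex | Mul ex ex

fun evx :: "(nat \<Rightarrow> real \<Rightarrow> real) \<Rightarrow> (nat \<Rightarrow> real \<Rightarrow> real) \<Rightarrow> (real \<Rightarrow> real) \<Rightarrow> (real \<Rightarrow> real) \<Rightarrow> ex \<Rightarrow> real \<Rightarrow> real" where
  "evx A B q p Qv t = q t"
| "evx A B q p Pv t = p t"
| "evx A B q p (Av i) t = A i (p t)"
| "evx A B q p (Bv j) t = B j (q t)"
| "evx A B q p (Add e1 e2) t = evx A B q p e1 t + evx A B q p e2 t"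
| "evx A B q p (Mul e1 e2) t = evx A B q p e1 t * evx A B q p e2 t"

fun dx :: "ex \<Rightarrow> ex" where
  "dx Qv = Av 1"
| "dx Pv = Bv 0"
| "dx (Av i) = Mul (Av (Suc i)) (Bv 0)"
| "dx (Bv j) = Mul (Bv (Suc j)) (Av 1)"
| "dx (Add e1 e2) = Add (dx e1) (dx e2)"
| "dx (Mul e1 e2) = Add (Mul (dx e1) e2) (Mul e1 (dx e2))"

lemma evx_deriv:
  assumes hA: "\<forall>k. \<forall>y\<in>U. (A k has_real_derivative A (Suc k) y) (at y)"
    and hB: "\<forall>k y. (B k has_real_derivative B (Suc k) y) (at y)"
    and hS: "\<forall>t\<in>S. p t \<in> U \<and> (q has_real_derivative A 1 (p t)) (at t within S) \<and>
               (p has_real_derivative B 0 (q t)) (at t within S)"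
    and t: "t \<in> S"
  shows "((\<lambda>t. evx A B q p e t) has_real_derivative evx A B q p (dx e) t) (at t within S)"
proof (induction e)
  case Qv then show ?case using hS t by simp
next
  case Pv then show ?case using hS t by simp
next
  case (Av i)
  have "((\<lambda>t. A i (p t)) has_real_derivative A (Suc i) (p t) * B 0 (q t)) (at t within S)"
    using DERIV_chain2[of "A i" "A (Suc i) (p t)" p "t" "B 0 (q t)" S] hA hS t by blast
  then show ?case by simp
next
  case (Bv j)
  have "((\<lambda>t. B j (q t)) has_real_derivative B (Suc j) (q t) * A 1 (p t)) (at t within S)"
    using DERIV_chain2[of "B j" "B (Suc j) (q t)" q "t" "A 1 (p t)" S] hB hS t by blast
  then show ?case by simp
next
  case (Add e1 e2)
  then show ?case by (simp add: DERIV_add)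
next
  case (Mul e1 e2)
  then show ?case by (auto intro!: derivative_eq_intros simp: algebra_simps)
qed

lemma smooth_sol:
  assumes hA: "\<forall>k. \<forall>y\<in>U. (A k has_real_derivative A (Suc k) y) (at y)"
    and hB: "\<forall>k y. (B k has_real_derivative B (Suc k) y) (at y)"
    and hS: "\<forall>t\<in>S. p t \<in> U \<and> (q has_real_derivative A 1 (p t)) (at t within S) \<and>
               (p has_real_derivative B 0 (q t)) (at t within S)"
  shows "smooth_on S (\<lambda>t. (q t, p t))"
  unfolding smooth_on_def
proof (intro exI[of _ "\<lambda>k t. (evx A B q p ((dx^^k) Qv) t, evx A B q p ((dx^^k) Pv) t)"] conjI ballI allI)
  fix k t assume t: "t \<in> S"
  show "((\<lambda>t. (evx A B q p ((dx^^k) Qv) t, evx A B q p ((dx^^k) Pv) t)) has_vector_derivative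
     (evx A B q p ((dx^^(Suc k)) Qv) t, evx A B q p ((dx^^(Suc k)) Pv) t)) (at t within S)"
    using evx_deriv[OF hA hB hS t]
    by (auto intro!: has_vector_derivative_Pair simp: has_real_derivative_iff_has_vector_derivative[symmetric])
qed simp



lemma lip_compact:
  fixes a a' :: "real \<Rightarrow> real"
  assumes U: "open U" and K: "compact K" "K \<subseteq> U"
    and da: "\<forall>y\<in>U. (a has_real_derivative a' y) (at y)" and ca: "continuous_on U a'"
  shows "\<exists>L\<ge>0. \<forall>x\<in>K. \<forall>y\<in>K. \<bar>a x - a y\<bar> \<le> L * \<bar>x - y\<bar>"
proof -
  obtain e where e: "e > 0" "(\<Union>x\<in>K. cball x e) \<subseteq> U"
    using compact_subset_open_imp_cball_epsilon_subset[OF K(1) U K(2)] by blast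
  define K' where "K' = {x + y | x y. x \<in> K \<and> y \<in> cball (0::real) e}"
  have cK': "compact K'" unfolding K'_def by (rule compact_sums[OF K(1)]) simp
  have K'U: "K' \<subseteq> U"
  proof
    fix z assume "z \<in> K'"
    then obtain x y where "z = x + y" "x \<in> K" "y \<in> cball 0 e" unfolding K'_def by blast
    then have "z \<in> cball x e" by (simp add: dist_norm)
    with \<open>x \<in> K\<close> e(2) show "z \<in> U" by blast
  qed
  have "compact (a' ` K')" using compact_continuous_image[OF continuous_on_subset[OF ca K'U] cK'] .
  then obtain M1 where M1: "\<forall>z\<in>K'. \<bar>a' z\<bar> \<le> M1"
    using compact_imp_bounded bounded_iff by (metis imageI real_norm_def)
  have "continuous_on U a"
    using da by (meson DERIV_isCont continuous_at_imp_continuous_on)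
  then have "compact (a ` K)" using compact_continuous_image[OF continuous_on_subset[OF _ K(2)] K(1)] by blast
  then obtain M0 where M0: "\<forall>z\<in>K. \<bar>a z\<bar> \<le> M0"
    using compact_imp_bounded bounded_iff by (metis imageI real_norm_def)
  define L where "L = max 0 M1 + 2 * max 0 M0 / e"
  have L0: "L \<ge> 0" unfolding L_def using e by auto
  have key: "\<bar>a x - a y\<bar> \<le> L * \<bar>x - y\<bar>" if xy: "x \<in> K" "y \<in> K" "x < y" for x y
  proof (cases "y - x \<le> e")
    case True
    have "\<And>z. x \<le> z \<Longrightarrow> z \<le> y \<Longrightarrow> DERIV a z :> a' z"
    proof -
      fix z assume "x \<le> z" "z \<le> y"
      then have "z - x \<in> cball 0 e" using True by (simp add: dist_norm)
      then have "\<exists>u v. z = u + v \<and> u \<in> K \<and> v \<in> cball 0 e" using xy by (intro exI[of _ x] exI[of _ "z - x"]) auto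
      then have "z \<in> K'" unfolding K'_def by blast
      then show "DERIV a z :> a' z" using da K'U by blast
    qed
    then obtain z where z: "x < z" "z < y" "a y - a x = (y - x) * a' z"
      using MVT2[OF xy(3)] by blast
    have "z - x \<in> cball 0 e" using True z by (simp add: dist_norm)
    then have "\<exists>u v. z = u + v \<and> u \<in> K \<and> v \<in> cball 0 e" using xy by (intro exI[of _ x] exI[of _ "z - x"]) auto
    then have "z \<in> K'" unfolding K'_def by blast
    then have "\<bar>a' z\<bar> \<le> max 0 M1" using M1 by force
    have "\<bar>a x - a y\<bar> = \<bar>y - x\<bar> * \<bar>a' z\<bar>" proof -
      have "\<bar>a x - a y\<bar> = \<bar>a y - a x\<bar>" by (simp add: abs_minus_commute)
      also have "\<dots> = \<bar>y - x\<bar> * \<bar>a' z\<bar>" using z(3) by (simp add: abs_mult)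
      finally show ?thesis .
    qed
    also have "\<dots> \<le> \<bar>y - x\<bar> * max 0 M1" using \<open>\<bar>a' z\<bar> \<le> max 0 M1\<close> by (simp add: mult_left_mono)
    also have "\<dots> \<le> \<bar>x - y\<bar> * L" unfolding L_def using e by (simp add: abs_minus_commute mult_left_mono)
    finally show ?thesis by (simp add: mult.commute)
  next
    case False
    have "\<bar>a x - a y\<bar> \<le> 2 * max 0 M0" proof -
      have "\<bar>a x\<bar> \<le> M0" "\<bar>a y\<bar> \<le> M0" using M0 xy by auto
      then show ?thesis by linarith
    qed
    also have "\<dots> = (2 * max 0 M0 / e) * e" using e by simp
    also have "\<dots> \<le> (2 * max 0 M0 / e) * \<bar>x - y\<bar>" using False e by (intro mult_left_mono) auto
    also have "\<dots> \<le> L * \<bar>x - y\<bar>" unfolding L_def by (intro mult_right_mono) auto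
    finally show ?thesis .
  qed
  show ?thesis
  proof (intro exI[of _ L] conjI L0 ballI)
    fix x y assume "x \<in> K" "y \<in> K"
    then show "\<bar>a x - a y\<bar> \<le> L * \<bar>x - y\<bar>"
      using key[of x y] key[of y x] by (cases x y rule: linorder_cases) (auto simp: abs_minus_commute)
  qed
qed



lemma two_abs_le: "2 * \<bar>u::real\<bar> * \<bar>v\<bar> \<le> u^2 + v^2"
proof -
  have "0 \<le> (\<bar>u\<bar> - \<bar>v\<bar>)^2" by simp
  then show ?thesis by (simp add: power2_eq_square algebra_simps)
qed

lemma tri2: "\<bar>2 * A * X + 2 * B * Y\<bar> \<le> 2 * \<bar>A\<bar> * \<bar>X\<bar> + 2 * \<bar>B\<bar> * \<bar>Y::real\<bar>"
  by (rule order_trans[OF abs_triangle_ineq]) (simp add: abs_mult)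

lemma ode_unique:
  fixes a a' b q1 p1 q2 p2 :: "real \<Rightarrow> real"
  assumes U: "open U" and da: "\<forall>y\<in>U. (a has_real_derivative a' y) (at y)" and ca: "continuous_on U a'"
    and lb: "\<forall>x y. \<bar>b x - b y\<bar> \<le> Lb * \<bar>x - y\<bar>"
    and I: "c \<le> ts" "ts \<le> d"
    and s1: "\<forall>t\<in>{c..d}. p1 t \<in> U \<and> (q1 has_real_derivative a (p1 t)) (at t within {c..d}) \<and>
               (p1 has_real_derivative b (q1 t)) (at t within {c..d})"
    and s2: "\<forall>t\<in>{c..d}. p2 t \<in> U \<and> (q2 has_real_derivative a (p2 t)) (at t within {c..d}) \<and>
               (p2 has_real_derivative b (q2 t)) (at t within {c..d})"
    and i: "q1 ts = q2 ts" "p1 ts = p2 ts"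
  shows "\<forall>t\<in>{c..d}. q1 t = q2 t \<and> p1 t = p2 t"
proof -
  have cp1: "continuous_on {c..d} p1" and cp2: "continuous_on {c..d} p2"
    using s1 s2 by (meson DERIV_continuous continuous_on_eq_continuous_within)+
  define K where "K = p1 ` {c..d} \<union> p2 ` {c..d}"
  have "compact K" unfolding K_def
    using compact_continuous_image[OF cp1] compact_continuous_image[OF cp2] by auto
  moreover have "K \<subseteq> U" unfolding K_def using s1 s2 by auto
  ultimately obtain L where L: "L \<ge> 0" "\<forall>x\<in>K. \<forall>y\<in>K. \<bar>a x - a y\<bar> \<le> L * \<bar>x - y\<bar>"
    using lip_compact[OF U _ _ da ca] by blast
  define Lb' where "Lb' = max 0 Lb"
  have lb': "\<bar>b x - b y\<bar> \<le> Lb' * \<bar>x - y\<bar>" for x y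
    using lb[rule_format, of x y] unfolding Lb'_def
    by (meson abs_ge_zero max.cobounded2 mult_right_mono order_trans)
  define C where "C = L + Lb'"
  define \<phi> where "\<phi> t = (q1 t - q2 t)^2 + (p1 t - p2 t)^2" for t
  define \<phi>' where "\<phi>' t = 2 * (q1 t - q2 t) * (a (p1 t) - a (p2 t)) + 2 * (p1 t - p2 t) * (b (q1 t) - b (q2 t))" for t
  have dphi: "(\<phi> has_real_derivative \<phi>' t) (at t within {c..d})" if "t \<in> {c..d}" for t
    unfolding \<phi>_def \<phi>'_def using s1 s2 that
    by (auto intro!: derivative_eq_intros simp: algebra_simps)
  have bnd: "\<bar>\<phi>' t\<bar> \<le> C * \<phi> t" if "t \<in> {c..d}" for t
  proof -
    define u1 where "u1 = q1 t - q2 t"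
    define u2 where "u2 = p1 t - p2 t"
    have "p1 t \<in> K" "p2 t \<in> K" using that unfolding K_def by auto
    then have ha: "\<bar>a (p1 t) - a (p2 t)\<bar> \<le> L * \<bar>u2\<bar>" using L unfolding u2_def by blast
    have hb: "\<bar>b (q1 t) - b (q2 t)\<bar> \<le> Lb' * \<bar>u1\<bar>" using lb' unfolding u1_def by blast
    have "\<bar>\<phi>' t\<bar> \<le> 2 * \<bar>u1\<bar> * \<bar>a (p1 t) - a (p2 t)\<bar> + 2 * \<bar>u2\<bar> * \<bar>b (q1 t) - b (q2 t)\<bar>"
      unfolding \<phi>'_def u1_def u2_def by (rule tri2)
    also have "\<dots> \<le> 2 * \<bar>u1\<bar> * (L * \<bar>u2\<bar>) + 2 * \<bar>u2\<bar> * (Lb' * \<bar>u1\<bar>)"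
      by (intro add_mono mult_left_mono ha hb) auto
    also have "\<dots> = (L + Lb') * (2 * \<bar>u1\<bar> * \<bar>u2\<bar>)" by (simp add: algebra_simps)
    also have "\<dots> \<le> (L + Lb') * (u1^2 + u2^2)"
      by (intro mult_left_mono two_abs_le) (use L in \<open>auto simp: Lb'_def\<close>)
    finally show ?thesis unfolding C_def \<phi>_def u1_def u2_def .
  qed
  have phi0: "\<phi> ts = 0" unfolding \<phi>_def using i by simp
  have phinn: "\<phi> t \<ge> 0" for t unfolding \<phi>_def by simp
  have cphi: "continuous_on {c..d} \<phi>"
    using dphi by (meson DERIV_continuous continuous_on_eq_continuous_within)
  have zero: "\<phi> t = 0" if t: "t \<in> {c..d}" for t
  proof (cases "ts \<le> t")
    case True
    define \<psi> where "\<psi> s = exp (- C * s) * \<phi> s" for s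
    have "\<psi> ts \<ge> \<psi> t"
    proof (rule DERIV_nonpos_imp_decreasing_open[of ts t \<psi>, OF True])
      fix x assume x: "ts < x" "x < t"
      then have xi: "x \<in> {c..d}" and xo: "c < x" "x < d" using I t by auto
      have "(\<phi> has_real_derivative \<phi>' x) (at x)" using dphi[OF xi] at_within_Icc_at[OF xo] by simp
      then have "(\<psi> has_real_derivative exp (- C * x) * (\<phi>' x - C * \<phi> x)) (at x)"
        unfolding \<psi>_def by (auto intro!: derivative_eq_intros simp: algebra_simps)
      moreover have "exp (- C * x) * (\<phi>' x - C * \<phi> x) \<le> 0"
        using bnd[OF xi] by (intro mult_nonneg_nonpos) auto
      ultimately show "\<exists>y. DERIV \<psi> x :> y \<and> y \<le> 0" by blast
    next
      show "continuous_on {ts..t} \<psi>" unfolding \<psi>_def using I t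
        by (intro continuous_intros continuous_on_subset[OF cphi]) auto
    qed
    then have "exp (- C * t) * \<phi> t \<le> 0" unfolding \<psi>_def using phi0 by simp
    then show ?thesis using phinn[of t] by (simp add: mult_le_0_iff)
  next
    case False
    define \<psi> where "\<psi> s = exp (C * s) * \<phi> s" for s
    have "\<psi> t \<le> \<psi> ts"
    proof (rule DERIV_nonneg_imp_increasing_open[of t ts \<psi>])
      show "t \<le> ts" using False by simp
      fix x assume x: "t < x" "x < ts"
      then have xi: "x \<in> {c..d}" and xo: "c < x" "x < d" using I t by auto
      have "(\<phi> has_real_derivative \<phi>' x) (at x)" using dphi[OF xi] at_within_Icc_at[OF xo] by simp
      then have "(\<psi> has_real_derivative exp (C * x) * (\<phi>' x + C * \<phi> x)) (at x)"
        unfolding \<psi>_def by (auto intro!: derivative_eq_intros simp: algebra_simps)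
      moreover have "exp (C * x) * (\<phi>' x + C * \<phi> x) \<ge> 0"
        using bnd[OF xi] by (intro mult_nonneg_nonneg) auto
      ultimately show "\<exists>y. DERIV \<psi> x :> y \<and> y \<ge> 0" by blast
    next
      show "continuous_on {t..ts} \<psi>" unfolding \<psi>_def using I t
        by (intro continuous_intros continuous_on_subset[OF cphi]) auto
    qed
    then have "exp (C * t) * \<phi> t \<le> 0" unfolding \<psi>_def using phi0 by simp
    then show ?thesis using phinn[of t] by (simp add: mult_le_0_iff)
  qed
  show ?thesis
  proof
    fix t assume "t \<in> {c..d}"
    then have "\<phi> t = 0" by (rule zero)
    then show "q1 t = q2 t \<and> p1 t = p2 t" unfolding \<phi>_def
      by (smt (verit) power2_less_0 sum_power2_eq_zero_iff)
  qed
qed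



lemma hvd_fst: "(f has_vector_derivative f') F \<Longrightarrow> ((\<lambda>x. fst (f x)) has_real_derivative fst f') F"
  unfolding has_real_derivative_iff_has_vector_derivative has_vector_derivative_def
  by (drule has_derivative_fst) simp

lemma hvd_snd: "(f has_vector_derivative f') F \<Longrightarrow> ((\<lambda>x. snd (f x)) has_real_derivative snd f') F"
  unfolding has_real_derivative_iff_has_vector_derivative has_vector_derivative_def
  by (drule has_derivative_snd) simp

lemma nfst: "\<bar>fst v\<bar> \<le> norm (v::real\<times>real)"
  by (metis norm_fst_le prod.collapse real_norm_def)
lemma nsnd: "\<bar>snd v\<bar> \<le> norm (v::real\<times>real)"
  by (metis norm_snd_le prod.collapse real_norm_def)

lemma ode_exists:
  fixes a a' b :: "real \<Rightarrow> real"
  assumes U: "open U" and psU: "ps \<in> U"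
    and da: "\<forall>y\<in>U. (a has_real_derivative a' y) (at y)" and ca: "continuous_on U a'"
    and lb: "\<forall>x y. \<bar>b x - b y\<bar> \<le> Lb * \<bar>x - y\<bar>" and cb: "continuous_on UNIV b"
    and mb: "\<forall>x. \<bar>b x\<bar> \<le> Mb" and bpos: "b qs > 0"
  shows "\<exists>h>0. \<exists>q p. q ts = qs \<and> p ts = ps \<and>
     (\<forall>t\<in>{ts-h..ts+h}. p t \<in> U \<and> b (q t) > 0 \<and>
        (q has_real_derivative a (p t)) (at t within {ts-h..ts+h}) \<and>
        (p has_real_derivative b (q t)) (at t within {ts-h..ts+h}))"
proof -
  obtain r where r: "r > 0" "cball ps r \<subseteq> U" using U psU open_contains_cball by blast
  define R where "R = {ps - r..ps + r}"
  have RU: "R \<subseteq> U"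
  proof
    fix y assume "y \<in> R"
    then have "y \<in> cball ps r" unfolding R_def by (auto simp: cball_def dist_real_def)
    then show "y \<in> U" using r by blast
  qed
  obtain L where L: "L \<ge> 0" "\<forall>x\<in>R. \<forall>y\<in>R. \<bar>a x - a y\<bar> \<le> L * \<bar>x - y\<bar>"
    using lip_compact[OF U _ RU da ca] unfolding R_def by blast
  have caU: "continuous_on U a"
    using da by (meson DERIV_isCont continuous_at_imp_continuous_on)
  have caR: "continuous_on R a" using continuous_on_subset[OF caU RU] .
  have "compact (a ` R)" using compact_continuous_image[OF caR] unfolding R_def by auto
  then obtain Ma where Ma: "\<forall>z\<in>R. \<bar>a z\<bar> \<le> Ma"
    using compact_imp_bounded bounded_iff by (metis imageI real_norm_def)
  define Lb' where "Lb' = max 0 Lb + 1"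
  have Lb'pos: "Lb' > 0" unfolding Lb'_def by simp
  have lb': "\<bar>b x - b y\<bar> \<le> Lb' * \<bar>x - y\<bar>" for x y
    using lb[rule_format, of x y] unfolding Lb'_def
    by (meson abs_ge_zero add_increasing2 less_eq_real_def max.cobounded2 mult_right_mono order_trans zero_less_one)
  define \<epsilon> where "\<epsilon> = b qs / Lb'"
  have epos: "\<epsilon> > 0" unfolding \<epsilon>_def using bpos Lb'pos by simp
  have bposn: "b x > 0" if "\<bar>x - qs\<bar> < \<epsilon>" for x
  proof -
    have "Lb' * \<bar>x - qs\<bar> < Lb' * \<epsilon>" using that Lb'pos by simp
    also have "\<dots> = b qs" unfolding \<epsilon>_def using Lb'pos by simp
    finally show ?thesis using lb'[of x qs] by linarith
  qed
  define cR where "cR y = max (ps - r) (min (ps + r) y)" for y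
  have cRR: "cR y \<in> R" for y unfolding cR_def R_def using r by auto
  have cRid: "y \<in> R \<Longrightarrow> cR y = y" for y unfolding cR_def R_def by auto
  have cRlip: "\<bar>cR x - cR y\<bar> \<le> \<bar>x - y\<bar>" for x y unfolding cR_def by auto
  define aT where "aT y = a (cR y)" for y
  have ccR: "continuous_on UNIV cR" unfolding cR_def by (intro continuous_intros)
  have cat: "continuous_on UNIV aT" unfolding aT_def
    using continuous_on_compose2[OF caR ccR] cRR by auto
  have atlip: "\<bar>aT x - aT y\<bar> \<le> L * \<bar>x - y\<bar>" for x y
    unfolding aT_def using L(2) cRR cRlip L(1)
    by (meson mult_left_mono order_trans)
  have atb: "\<bar>aT x\<bar> \<le> Ma" for x unfolding aT_def using Ma cRR by blast
  define F where "F z = (aT (snd z), b (fst z))" for z :: "real \<times> real"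
  define MF where "MF = max 0 Ma + max 0 Mb"
  define LF where "LF = L + Lb'"
  have MF0: "MF \<ge> 0" and LF0: "LF \<ge> 0" unfolding MF_def LF_def using L Lb'pos by auto
  have Fb: "norm (F z) \<le> MF" for z
  proof -
    have "norm (F z) \<le> norm (aT (snd z)) + norm (b (fst z))" unfolding F_def by (rule norm_Pair_le)
    also have "\<dots> \<le> MF" unfolding MF_def using atb[of "snd z"] mb[rule_format, of "fst z"] by (intro add_mono) auto
    finally show ?thesis .
  qed
  have Flip: "norm (F z - F w) \<le> LF * norm (z - w)" for z w
  proof -
    have "norm (F z - F w) \<le> \<bar>aT (snd z) - aT (snd w)\<bar> + \<bar>b (fst z) - b (fst w)\<bar>"
      unfolding F_def using norm_Pair_le[of "aT (snd z) - aT (snd w)" "b (fst z) - b (fst w)"] by simp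
    also have "\<dots> \<le> L * \<bar>snd z - snd w\<bar> + Lb' * \<bar>fst z - fst w\<bar>" by (intro add_mono atlip lb')
    also have "\<dots> \<le> L * norm (z - w) + Lb' * norm (z - w)"
      using nfst[of "z - w"] nsnd[of "z - w"] L(1) Lb'pos
      by (intro add_mono mult_left_mono) auto
    finally show ?thesis unfolding LF_def by (simp add: algebra_simps)
  qed
  have c1: "continuous_on UNIV (\<lambda>z::real\<times>real. aT (snd z))"
    by (rule continuous_on_compose2[OF cat continuous_on_snd[OF continuous_on_id]]) auto
  have c2: "continuous_on UNIV (\<lambda>z::real\<times>real. b (fst z))"
    by (rule continuous_on_compose2[OF cb continuous_on_fst[OF continuous_on_id]]) auto
  have cF: "continuous_on UNIV F" unfolding F_def using c1 c2 by (rule continuous_on_Pair)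
  define h where "h = min (1 / (8 * (LF + 1))) (min r (\<epsilon> / 2) / (4 * (MF + 1)))"
  have hpos: "h > 0" unfolding h_def using LF0 MF0 r epos by auto
  have hLF: "4 * h * LF \<le> 1/2"
  proof -
    have "h \<le> 1 / (8 * (LF + 1))" unfolding h_def by simp
    then have "4 * h * (LF + 1) \<le> 4 * (1 / (8 * (LF + 1))) * (LF + 1)" using LF0 hpos by (intro mult_right_mono) auto
    also have "\<dots> = 1/2" using LF0 by (simp add: field_simps)
    finally show ?thesis using hpos by (simp add: algebra_simps)
  qed
  have hMF: "4 * h * MF \<le> min r (\<epsilon> / 2)"
  proof -
    have "h \<le> min r (\<epsilon> / 2) / (4 * (MF + 1))" unfolding h_def by simp
    then have "4 * h * (MF + 1) \<le> 4 * (min r (\<epsilon> / 2) / (4 * (MF + 1))) * (MF + 1)" using MF0 hpos by (intro mult_right_mono) auto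
    also have "\<dots> = min r (\<epsilon> / 2)" using MF0 by (simp add: field_simps)
    finally show ?thesis using hpos by (simp add: algebra_simps)
  qed
  define a0 where "a0 = ts - h"
  define b0 where "b0 = ts + h"
  define cl where "cl t = max a0 (min b0 t)" for t
  have clI: "cl t \<in> {a0..b0}" for t unfolding cl_def a0_def b0_def using hpos by auto
  have clid: "t \<in> {a0..b0} \<Longrightarrow> cl t = t" for t unfolding cl_def by auto
  have tsI: "ts \<in> {a0..b0}" unfolding a0_def b0_def using hpos by auto
  define J where "J x u = integral {a0..u} (\<lambda>s. F (apply_bcontfun x s))" for x :: "real \<Rightarrow>\<^sub>C (real \<times> real)" and u
  have cG: "continuous_on S (\<lambda>s. F (apply_bcontfun x s))" for x S
    by (intro continuous_on_compose2[OF cF]) auto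
  have Jb: "norm (J x u) \<le> MF * (2 * h)" if "u \<in> {a0..b0}" for x u
  proof -
    have "norm (J x u) \<le> MF * (u - a0)" unfolding J_def
      by (rule integral_bound) (use that Fb cG in auto)
    also have "\<dots> \<le> MF * (2 * h)" using that MF0 unfolding a0_def b0_def by (intro mult_left_mono) auto
    finally show ?thesis .
  qed
  have Jlip: "norm (J x u - J y u) \<le> LF * dist x y * (2 * h)" if "u \<in> {a0..b0}" for x y u
  proof -
    have "J x u - J y u = integral {a0..u} (\<lambda>s. F (apply_bcontfun x s) - F (apply_bcontfun y s))"
      unfolding J_def
      by (rule Henstock_Kurzweil_Integration.integral_diff[symmetric]; rule integrable_continuous_interval; rule cG)
    also have "norm \<dots> \<le> (LF * dist x y) * (u - a0)"
    proof (rule integral_bound)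
      show "a0 \<le> u" using that by simp
      show "continuous_on {a0..u} (\<lambda>s. F (apply_bcontfun x s) - F (apply_bcontfun y s))"
        by (intro continuous_intros cG)
      fix s
      have "norm (F (apply_bcontfun x s) - F (apply_bcontfun y s)) \<le> LF * norm (apply_bcontfun x s - apply_bcontfun y s)"
        by (rule Flip)
      also have "\<dots> \<le> LF * dist x y" using dist_bounded[of x s y] LF0 by (simp add: dist_norm mult_left_mono)
      finally show "norm (F (apply_bcontfun x s) - F (apply_bcontfun y s)) \<le> LF * dist x y" .
    qed
    also have "\<dots> \<le> LF * dist x y * (2 * h)" using that LF0 unfolding a0_def b0_def
      by (intro mult_left_mono) auto
    finally show ?thesis .
  qed
  define Tf where "Tf x t = (qs, ps) + J x (cl t) - J x ts" for x t
  have Tfb: "Tf x \<in> bcontfun" for x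
  proof (rule bcontfun_normI)
    have "continuous_on {a0..b0} (J x)" unfolding J_def
      by (rule indefinite_integral_continuous_1, rule integrable_continuous_interval, rule cG)
    then have "continuous_on UNIV (\<lambda>t. J x (cl t))"
    proof -
      have "continuous_on UNIV cl" unfolding cl_def by (intro continuous_intros)
      moreover have "cl ` UNIV \<subseteq> {a0..b0}" using clI by blast
      ultimately show ?thesis using continuous_on_compose2[OF \<open>continuous_on {a0..b0} (J x)\<close>] by blast
    qed
    then show "continuous_on UNIV (Tf x)" unfolding Tf_def by (intro continuous_intros)
    fix t
    have "norm (Tf x t) \<le> norm (qs, ps) + norm (J x (cl t)) + norm (J x ts)"
      unfolding Tf_def by (meson add_right_mono norm_triangle_ineq norm_triangle_ineq4 order_trans)
    also have "\<dots> \<le> norm (qs, ps) + MF * (2 * h) + MF * (2 * h)"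
      using Jb[OF clI] Jb[OF tsI] by (intro add_mono) auto
    finally show "norm (Tf x t) \<le> norm (qs, ps) + MF * (2 * h) + MF * (2 * h)" .
  qed
  define T where "T x = Bcontfun (Tf x)" for x
  have Tapp: "apply_bcontfun (T x) = Tf x" for x unfolding T_def using Tfb Bcontfun_inverse by blast
  have contr: "dist (T x) (T y) \<le> (1/2) * dist x y" for x y
  proof (rule dist_bound)
    fix t
    have "dist (T x t) (T y t) = norm ((J x (cl t) - J y (cl t)) - (J x ts - J y ts))"
      unfolding Tapp Tf_def dist_norm by (simp add: algebra_simps)
    also have "\<dots> \<le> norm (J x (cl t) - J y (cl t)) + norm (J x ts - J y ts)" by (rule norm_triangle_ineq4)
    also have "\<dots> \<le> LF * dist x y * (2 * h) + LF * dist x y * (2 * h)"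
      by (intro add_mono Jlip clI tsI)
    also have "\<dots> = (4 * h * LF) * dist x y" by (simp add: algebra_simps)
    also have "\<dots> \<le> (1/2) * dist x y" using hLF by (intro mult_right_mono) auto
    finally show "dist (T x t) (T y t) \<le> (1/2) * dist x y" .
  qed
  obtain x where fx: "T x = x" using banach_fix_type[of "1/2" T] contr by auto
  define X where "X = apply_bcontfun x"
  have Xeq: "X t = (qs, ps) + J x t - J x ts" if "t \<in> {a0..b0}" for t
    unfolding X_def using fx Tapp[of x] clid[OF that] unfolding Tf_def by metis
  have Xts: "X ts = (qs, ps)" using Xeq[OF tsI] by simp
  have Xd: "(X has_vector_derivative F (X t)) (at t within {a0..b0})" if t: "t \<in> {a0..b0}" for t
  proof -
    have "(J x has_vector_derivative F (X t)) (at t within {a0..b0})"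
      unfolding J_def X_def by (rule integral_has_vector_derivative[OF cG t])
    then have "((\<lambda>u. (qs, ps) + J x u - J x ts) has_vector_derivative F (X t)) (at t within {a0..b0})"
      by (auto intro!: derivative_eq_intros)
    then show ?thesis
      by (rule has_vector_derivative_transform_within[of _ _ _ _ 1]) (use t Xeq in auto)
  qed
  have Xbnd: "norm (X t - (qs, ps)) \<le> 4 * h * MF" if t: "t \<in> {a0..b0}" for t
  proof -
    have "X t - (qs, ps) = J x t - J x ts" unfolding Xeq[OF t] by (simp add: algebra_simps)
    then have "norm (X t - (qs, ps)) = norm (J x t - J x ts)" by simp
    also have "\<dots> \<le> norm (J x t) + norm (J x ts)" by (rule norm_triangle_ineq4)
    also have "\<dots> \<le> MF * (2 * h) + MF * (2 * h)" using Jb[OF t] Jb[OF tsI] by (intro add_mono)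
    finally show ?thesis by (simp add: algebra_simps)
  qed
  define q where "q t = fst (X t)" for t
  define p where "p t = snd (X t)" for t
  have qts: "q ts = qs" and pts: "p ts = ps" unfolding q_def p_def Xts by simp_all
  have P: "\<forall>t\<in>{ts-h..ts+h}. p t \<in> U \<and> b (q t) > 0 \<and>
        (q has_real_derivative a (p t)) (at t within {ts-h..ts+h}) \<and>
        (p has_real_derivative b (q t)) (at t within {ts-h..ts+h})"
  proof (intro ballI conjI)
    fix t assume t': "t \<in> {ts - h..ts + h}"
    then have t: "t \<in> {a0..b0}" unfolding a0_def b0_def .
    have "\<bar>p t - ps\<bar> \<le> 4 * h * MF" unfolding p_def
      using Xbnd[OF t] nsnd[of "X t - (qs, ps)"] by simp
    then have pR: "p t \<in> R" unfolding R_def using hMF by auto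
    then show "p t \<in> U" using RU by blast
    have "\<bar>q t - qs\<bar> \<le> 4 * h * MF" unfolding q_def
      using Xbnd[OF t] nfst[of "X t - (qs, ps)"] by simp
    then show "b (q t) > 0" using hMF epos by (intro bposn) auto
    have "(q has_real_derivative fst (F (X t))) (at t within {a0..b0})"
      unfolding q_def by (rule hvd_fst[OF Xd[OF t]])
    then show "(q has_real_derivative a (p t)) (at t within {ts - h..ts + h})"
      unfolding F_def aT_def a0_def b0_def using cRid[OF pR] by (simp add: p_def)
    have "(p has_real_derivative snd (F (X t))) (at t within {a0..b0})"
      unfolding p_def by (rule hvd_snd[OF Xd[OF t]])
    then show "(p has_real_derivative b (q t)) (at t within {ts - h..ts + h})"
      unfolding F_def a0_def b0_def by (simp add: q_def)
  qed
  show ?thesis using hpos qts pts P by blast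
qed


lemma lip_global:
  fixes f f' :: "real \<Rightarrow> real"
  assumes d: "\<forall>x. (f has_real_derivative f' x) (at x)" and bd: "\<forall>x. \<bar>f' x\<bar> \<le> M"
  shows "\<bar>f x - f y\<bar> \<le> M * \<bar>x - y\<bar>"
proof -
  have key: "\<bar>f x - f y\<bar> \<le> M * \<bar>x - y\<bar>" if "x < y" for x y
  proof -
    have "\<exists>z. x < z \<and> z < y \<and> f y - f x = (y - x) * f' z" by (rule MVT2[OF that]) (use d in auto)
    then obtain z where z: "f y - f x = (y - x) * f' z" by blast
    have "\<bar>f x - f y\<bar> = \<bar>y - x\<bar> * \<bar>f' z\<bar>" using z by (metis abs_minus_commute abs_mult)
    also have "\<dots> \<le> \<bar>y - x\<bar> * M" using bd by (simp add: mult_left_mono)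
    finally show ?thesis by (simp add: abs_minus_commute mult.commute)
  qed
  show ?thesis using key[of x y] key[of y x]
    by (cases x y rule: linorder_cases) (auto simp: abs_minus_commute)
qed

lemma cont_from_deriv:
  "\<forall>t\<in>S. (f has_real_derivative f' t) (at t within S) \<Longrightarrow> continuous_on S f"
  by (meson DERIV_continuous continuous_on_eq_continuous_within)

theorem proposition3p15:
  fixes V W :: "real \<Rightarrow> real" and n :: nat and U :: "real set"
    and ps qs ts q0 p0 :: real and q p :: "real \<Rightarrow> real"
  assumes V_smooth: "smooth_on UNIV V" and V_per: "\<forall>z. V (z + 1) = V z"
    and W_smooth: "smooth_bounded_derivs W"
    and n_pos: "1 \<le> n"
    and U_open: "open U" and U_sub: "U \<subseteq> {0..2*pi}" and ps_U: "ps \<in> U"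
    and A1: "bloch_band V n ps = bloch_band V (Suc n) ps"
            "\<forall>k\<in>U. k \<noteq> ps \<longrightarrow> bloch_band V n k \<noteq> bloch_band V (Suc n) k"
    and A2: "\<exists>M>0. \<forall>k\<in>closure U. \<forall>m. 1 \<le> m \<and> m \<notin> {n, Suc n} \<longrightarrow>
               M \<le> \<bar>bloch_band V m k - bloch_band V (Suc n) k\<bar> \<and>
               M \<le> \<bar>bloch_band V n k - bloch_band V m k\<bar>"
    and A3: "smooth_on U (E_plus V n ps)" "smooth_on U (E_minus V n ps)"
            "\<exists>chiP chiM :: real \<Rightarrow> real \<Rightarrow> complex.
               (\<forall>k\<in>U. normalized_bloch_eigenfunction V k (E_plus V n ps k) (\<lambda>z. chiP z k) \<and>
                       normalized_bloch_eigenfunction V k (E_minus V n ps k) (\<lambda>z. chiM z k)) \<and>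
               smooth2_on UNIV U chiP \<and> smooth2_on UNIV U chiM"
    and A4: "deriv (E_plus V n ps) ps > 0" "deriv (E_minus V n ps) ps < 0"
    and gap0: "bloch_gap V n p0 > 0"
    and ts_pos: "ts > 0"
    and init: "q 0 = q0" "p 0 = p0"
    and sol_smooth: "smooth_on {0..<ts} (\<lambda>t. (q t, p t))"
    and sol: "ham_sol (bloch_band V n) W {0..<ts} q p"
    and sol_unique: "\<forall>q' p'. smooth_on {0..<ts} (\<lambda>t. (q' t, p' t)) \<and> q' 0 = q0 \<and> p' 0 = p0 \<and>
                        ham_sol (bloch_band V n) W {0..<ts} q' p' \<longrightarrow>
                        (\<forall>t\<in>{0..<ts}. q' t = q t \<and> p' t = p t)"
    and sol_gap: "\<forall>t\<in>{0..<ts}. bloch_gap V n (p t) > 0"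
    and p_lim: "(p \<longlongrightarrow> ps) (at_left ts)"
    and q_lim: "(q \<longlongrightarrow> qs) (at_left ts)"
    and force: "- deriv W qs > 0"
  shows "\<exists>\<delta>0>0. \<forall>\<delta>. 0 < \<delta> \<and> \<delta> \<le> \<delta>0 \<longrightarrow>
     (\<exists>qm pm.
        \<comment> \<open>(i) existence and uniqueness of the E_- trajectory through (qs,ps) at time ts\<close>
        smooth_on {ts-\<delta>..ts+\<delta>} (\<lambda>t. (qm t, pm t)) \<and> (\<forall>t\<in>{ts-\<delta>..ts+\<delta>}. pm t \<in> U) \<and>
        ham_sol (E_minus V n ps) W {ts-\<delta>..ts+\<delta>} qm pm \<and> qm ts = qs \<and> pm ts = ps \<and>
        (\<forall>q' p'. smooth_on {ts-\<delta>..ts+\<delta>} (\<lambda>t. (q' t, p' t)) \<and> (\<forall>t\<in>{ts-\<delta>..ts+\<delta>}. p' t \<in> U) \<and>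
           ham_sol (E_minus V n ps) W {ts-\<delta>..ts+\<delta>} q' p' \<and> q' ts = qs \<and> p' ts = ps \<longrightarrow>
           (\<forall>t\<in>{ts-\<delta>..ts+\<delta>}. q' t = qm t \<and> p' t = pm t)) \<and>
        \<comment> \<open>(ii) and (iii)\<close>
        (\<exists>T0>ts+\<delta>. \<forall>T'. ts + \<delta> \<le> T' \<and> T' \<le> T0 \<longrightarrow>
           (\<exists>qn pn.
              (\<forall>t\<in>{ts<..T'}. pn t \<in> {0..2*pi}) \<and>
              ham_sol (bloch_band V n) W {ts<..T'} qn pn \<and>
              ((\<lambda>t. (qn t, pn t)) \<longlongrightarrow> (qs, ps)) (at_right ts) \<and>
              (\<forall>t\<in>{ts<..T'}. bloch_gap V n (pn t) > 0) \<and>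
              (\<forall>t\<in>{ts<..ts+\<delta>}. qm t = qn t \<and> pm t = pn t) \<and>
              smooth_on {ts-\<delta>..T'}
                (\<lambda>t. if t \<le> ts + \<delta> then (qm t, pm t) else (qn t, pn t)))))"
proof -
  obtain Df :: "nat \<Rightarrow> real \<Rightarrow> real" where Df0: "\<forall>x\<in>U. Df 0 x = E_minus V n ps x"
    and Dfd: "\<forall>k. \<forall>x\<in>U. (Df k has_vector_derivative Df (Suc k) x) (at x within U)"
    using A3(2) unfolding smooth_on_def by (elim exE conjE) (rule that)
  have hA: "\<forall>k. \<forall>y\<in>U. (Df k has_real_derivative Df (Suc k) y) (at y)"
  proof (intro allI ballI)
    fix k y assume y: "y \<in> U"
    have "(Df k has_vector_derivative Df (Suc k) y) (at y within U)" using Dfd y by blast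
    then show "(Df k has_real_derivative Df (Suc k) y) (at y)"
      using at_within_open[OF y U_open] by (simp add: has_real_derivative_iff_has_vector_derivative)
  qed
  have hA0: "(Df 0 has_real_derivative Df 1 y) (at y)" if "y \<in> U" for y
    using hA that by (metis One_nat_def)
  have dEm: "(E_minus V n ps has_real_derivative Df 1 y) (at y)" if "y \<in> U" for y
    using has_field_derivative_transform_within_open[OF hA0[OF that] U_open that] Df0 that by simp
  have derivEm: "deriv (E_minus V n ps) y = Df 1 y" if "y \<in> U" for y
    using DERIV_imp_deriv[OF dEm[OF that]] .
  have da: "\<forall>y\<in>U. (Df 1 has_real_derivative Df 2 y) (at y)"
    using spec[OF hA, of 1] by (simp add: numeral_2_eq_2)
  have ca: "continuous_on U (Df 2)"
    using spec[OF hA, of 2] by (meson DERIV_isCont continuous_at_imp_continuous_on)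
  obtain DW :: "nat \<Rightarrow> real \<Rightarrow> real" where DW0: "DW 0 = W" and DWd: "\<forall>k x. (DW k has_real_derivative DW (Suc k) x) (at x)"
    and DWb: "\<forall>k\<ge>1. bounded (range (DW k))"
    using W_smooth unfolding smooth_bounded_derivs_def by blast
  define B where "B k x = - DW (Suc k) x" for k x
  have hB: "\<forall>k y. (B k has_real_derivative B (Suc k) y) (at y)"
    unfolding B_def using DWd by (auto intro!: derivative_eq_intros)
  have derivW: "deriv W x = DW 1 x" for x
    using DERIV_imp_deriv[OF DWd[rule_format, of 0 x]] DW0 by simp
  obtain M1 where M1: "\<forall>x. \<bar>DW 1 x\<bar> \<le> M1"
    using DWb[rule_format, of 1] unfolding bounded_iff by (metis rangeI real_norm_def order_refl)
  obtain M2 where M2: "\<forall>x. \<bar>DW 2 x\<bar> \<le> M2"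
    using DWb[rule_format, of 2] unfolding bounded_iff by (metis rangeI real_norm_def one_le_numeral)
  have lb: "\<forall>x y. \<bar>B 0 x - B 0 y\<bar> \<le> M2 * \<bar>x - y\<bar>"
  proof (intro allI)
    fix x y
    have "\<bar>DW 1 x - DW 1 y\<bar> \<le> M2 * \<bar>x - y\<bar>"
      by (rule lip_global[of "DW 1" "DW 2"]) (use DWd M2 in \<open>auto simp: numeral_2_eq_2\<close>)
    then show "\<bar>B 0 x - B 0 y\<bar> \<le> M2 * \<bar>x - y\<bar>" unfolding B_def by (simp add: abs_minus_commute)
  qed
  have mb: "\<forall>x. \<bar>B 0 x\<bar> \<le> M1" unfolding B_def using M1 by simp
  have cb: "continuous_on UNIV (B 0)"
    using hB by (meson DERIV_isCont continuous_at_imp_continuous_on)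
  have bpos: "B 0 qs > 0" unfolding B_def using force derivW by simp
  obtain h qx px where hpos: "h > 0" and qts: "qx ts = qs" and pts: "px ts = ps"
    and S: "\<forall>t\<in>{ts-h..ts+h}. px t \<in> U \<and> B 0 (qx t) > 0 \<and>
        (qx has_real_derivative Df 1 (px t)) (at t within {ts-h..ts+h}) \<and>
        (px has_real_derivative B 0 (qx t)) (at t within {ts-h..ts+h})"
    using ode_exists[OF U_open ps_U da ca lb cb mb bpos, of ts] by blast
  have Ssub: "\<forall>t\<in>S'. px t \<in> U \<and> (qx has_real_derivative Df 1 (px t)) (at t within S') \<and>
        (px has_real_derivative B 0 (qx t)) (at t within S')" if "S' \<subseteq> {ts-h..ts+h}" for S'
    using S that by (auto intro: DERIV_subset)
  have smooth: "smooth_on S' (\<lambda>t. (qx t, px t))" if "S' \<subseteq> {ts-h..ts+h}" for S'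
    by (rule smooth_sol[OF hA hB Ssub[OF that]])
  have hamm: "ham_sol (E_minus V n ps) W S' qx px" if "S' \<subseteq> {ts-h..ts+h}" for S'
    unfolding ham_sol_def using Ssub[OF that] derivEm derivW by (simp add: B_def)
  have pinc: "px t > ps" if "ts < t" "t \<le> ts + h" for t
  proof -
    have "px ts < px t"
    proof (rule DERIV_pos_imp_increasing_open[OF that(1)])
      fix x assume x: "ts < x" "x < t"
      then have xi: "x \<in> {ts-h..ts+h}" and xo: "ts - h < x" "x < ts + h" using that hpos by auto
      have "(px has_real_derivative B 0 (qx x)) (at x)" using S xi at_within_Icc_at[OF xo] by metis
      then show "\<exists>y. DERIV px x :> y \<and> y > 0" using S xi by blast
    next
      show "continuous_on {ts..t} px"
        using Ssub[of "{ts..t}"] that hpos by (intro cont_from_deriv) auto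
    qed
    then show ?thesis using pts by simp
  qed
  have tso: "ts - h < ts" "ts < ts + h" using hpos by auto
  have tsI: "ts \<in> {ts-h..ts+h}" using hpos by auto
  have "(qx has_real_derivative Df 1 (px ts)) (at ts within {ts-h..ts+h})"
    and "(px has_real_derivative B 0 (qx ts)) (at ts within {ts-h..ts+h})" using S tsI by blast+
  then have "(qx has_real_derivative Df 1 (px ts)) (at ts)"
    and "(px has_real_derivative B 0 (qx ts)) (at ts)" by (simp_all add: at_within_Icc_at[OF tso])
  then have isq: "isCont qx ts" and isp: "isCont px ts" by (blast intro: DERIV_isCont)+
  have lim: "((\<lambda>t. (qx t, px t)) \<longlongrightarrow> (qs, ps)) (at_right ts)"
  proof -
    have "((\<lambda>t. (qx t, px t)) \<longlongrightarrow> (qx ts, px ts)) (at ts)"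
      using isq isp unfolding isCont_def by (rule tendsto_Pair)
    moreover have "at_right ts \<le> at ts" by (rule at_le) simp
    ultimately have "((\<lambda>t. (qx t, px t)) \<longlongrightarrow> (qx ts, px ts)) (at_right ts)"
      by (rule tendsto_mono[rotated])
    then show ?thesis using qts pts by simp
  qed
  obtain M where Mpos: "M > 0" and MA2: "\<forall>k\<in>closure U. \<forall>m. 1 \<le> m \<and> m \<notin> {n, Suc n} \<longrightarrow>
               M \<le> \<bar>bloch_band V m k - bloch_band V (Suc n) k\<bar> \<and>
               M \<le> \<bar>bloch_band V n k - bloch_band V m k\<bar>" using A2 by blast
  have gap: "bloch_gap V n k > 0" if "k \<in> U" "k \<noteq> ps" for k
  proof -
    define c where "c = min M \<bar>bloch_band V n k - bloch_band V (Suc n) k\<bar>"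
    have "bloch_band V n k \<noteq> bloch_band V (Suc n) k" using A1(2) that by blast
    then have cpos: "c > 0" unfolding c_def using Mpos by simp
    have kc: "k \<in> closure U" using that closure_subset by blast
    have "c \<le> Inf {\<bar>bloch_band V n k - bloch_band V m' k\<bar> | m'. 1 \<le> m' \<and> m' \<noteq> n}"
    proof (rule cInf_greatest)
      have "\<bar>bloch_band V n k - bloch_band V (Suc n) k\<bar> \<in> {\<bar>bloch_band V n k - bloch_band V m' k\<bar> | m'. 1 \<le> m' \<and> m' \<noteq> n}"
        by (rule CollectI, rule exI[of _ "Suc n"]) simp
      then show "{\<bar>bloch_band V n k - bloch_band V m' k\<bar> | m'. 1 \<le> m' \<and> m' \<noteq> n} \<noteq> {}" by blast
      fix x assume "x \<in> {\<bar>bloch_band V n k - bloch_band V m' k\<bar> | m'. 1 \<le> m' \<and> m' \<noteq> n}"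
      then obtain m' where m': "x = \<bar>bloch_band V n k - bloch_band V m' k\<bar>" "1 \<le> m'" "m' \<noteq> n" by blast
      show "c \<le> x"
      proof (cases "m' = Suc n")
        case True then show ?thesis using m' unfolding c_def by simp
      next
        case False
        then have mn: "1 \<le> m' \<and> m' \<notin> {n, Suc n}" using m' by simp
        have "M \<le> \<bar>bloch_band V n k - bloch_band V m' k\<bar>" using MA2 kc mn by blast
        then have "M \<le> x" using m'(1) by simp
        then show ?thesis unfolding c_def by simp
      qed
    qed
    then show ?thesis unfolding bloch_gap_def using cpos by simp
  qed
  have derivBn: "deriv (bloch_band V n) y = Df 1 y" if "y \<in> U" "y > ps" for y
  proof -
    have "(bloch_band V n has_real_derivative Df 1 y) (at y)"
    proof (rule has_field_derivative_transform_within_open[OF hA0[OF that(1)] _ _])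
      show "open (U \<inter> {ps<..})" using U_open by (intro open_Int open_greaterThan)
      show "y \<in> U \<inter> {ps<..}" using that by simp
      fix z assume z: "z \<in> U \<inter> {ps<..}"
      then have "Df 0 z = E_minus V n ps z" using Df0 by blast
      also have "\<dots> = bloch_band V n z" using z unfolding E_minus_def by simp
      finally show "Df 0 z = bloch_band V n z" .
    qed
    then show ?thesis by (rule DERIV_imp_deriv)
  qed
  show ?thesis
  proof (intro exI[of _ "h/2"] conjI allI impI)
    show "h / 2 > 0" using hpos by simp
    fix \<delta> assume d: "0 < \<delta> \<and> \<delta> \<le> h / 2"
    have sub1: "{ts-\<delta>..ts+\<delta>} \<subseteq> {ts-h..ts+h}" using d by auto
    show "\<exists>qm pm. smooth_on {ts-\<delta>..ts+\<delta>} (\<lambda>t. (qm t, pm t)) \<and> (\<forall>t\<in>{ts-\<delta>..ts+\<delta>}. pm t \<in> U) \<and>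
        ham_sol (E_minus V n ps) W {ts-\<delta>..ts+\<delta>} qm pm \<and> qm ts = qs \<and> pm ts = ps \<and>
        (\<forall>q' p'. smooth_on {ts-\<delta>..ts+\<delta>} (\<lambda>t. (q' t, p' t)) \<and> (\<forall>t\<in>{ts-\<delta>..ts+\<delta>}. p' t \<in> U) \<and>
           ham_sol (E_minus V n ps) W {ts-\<delta>..ts+\<delta>} q' p' \<and> q' ts = qs \<and> p' ts = ps \<longrightarrow>
           (\<forall>t\<in>{ts-\<delta>..ts+\<delta>}. q' t = qm t \<and> p' t = pm t)) \<and>
        (\<exists>T0>ts+\<delta>. \<forall>T'. ts + \<delta> \<le> T' \<and> T' \<le> T0 \<longrightarrow>
           (\<exists>qn pn.
              (\<forall>t\<in>{ts<..T'}. pn t \<in> {0..2*pi}) \<and>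
              ham_sol (bloch_band V n) W {ts<..T'} qn pn \<and>
              ((\<lambda>t. (qn t, pn t)) \<longlongrightarrow> (qs, ps)) (at_right ts) \<and>
              (\<forall>t\<in>{ts<..T'}. bloch_gap V n (pn t) > 0) \<and>
              (\<forall>t\<in>{ts<..ts+\<delta>}. qm t = qn t \<and> pm t = pn t) \<and>
              smooth_on {ts-\<delta>..T'}
                (\<lambda>t. if t \<le> ts + \<delta> then (qm t, pm t) else (qn t, pn t))))"
    proof (rule exI[of _ qx], rule exI[of _ px], intro conjI)
      show "smooth_on {ts-\<delta>..ts+\<delta>} (\<lambda>t. (qx t, px t))" by (rule smooth[OF sub1])
      show "\<forall>t\<in>{ts-\<delta>..ts+\<delta>}. px t \<in> U" using S sub1 by blast
      show "ham_sol (E_minus V n ps) W {ts-\<delta>..ts+\<delta>} qx px" by (rule hamm[OF sub1])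
      show "qx ts = qs" "px ts = ps" by (rule qts, rule pts)
      show "\<forall>q' p'. smooth_on {ts-\<delta>..ts+\<delta>} (\<lambda>t. (q' t, p' t)) \<and> (\<forall>t\<in>{ts-\<delta>..ts+\<delta>}. p' t \<in> U) \<and>
           ham_sol (E_minus V n ps) W {ts-\<delta>..ts+\<delta>} q' p' \<and> q' ts = qs \<and> p' ts = ps \<longrightarrow>
           (\<forall>t\<in>{ts-\<delta>..ts+\<delta>}. q' t = qx t \<and> p' t = px t)"
      proof (intro allI impI)
        fix q' p' assume H: "smooth_on {ts-\<delta>..ts+\<delta>} (\<lambda>t. (q' t, p' t)) \<and> (\<forall>t\<in>{ts-\<delta>..ts+\<delta>}. p' t \<in> U) \<and>
           ham_sol (E_minus V n ps) W {ts-\<delta>..ts+\<delta>} q' p' \<and> q' ts = qs \<and> p' ts = ps"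
        have s1: "\<forall>t\<in>{ts-\<delta>..ts+\<delta>}. p' t \<in> U \<and> (q' has_real_derivative Df 1 (p' t)) (at t within {ts-\<delta>..ts+\<delta>}) \<and>
               (p' has_real_derivative B 0 (q' t)) (at t within {ts-\<delta>..ts+\<delta>})"
        proof (intro ballI conjI)
          fix t assume t: "t \<in> {ts-\<delta>..ts+\<delta>}"
          show pU: "p' t \<in> U" using H t by blast
          have hd: "(q' has_real_derivative deriv (E_minus V n ps) (p' t)) (at t within {ts-\<delta>..ts+\<delta>})"
            "(p' has_real_derivative - deriv W (q' t)) (at t within {ts-\<delta>..ts+\<delta>})"
            using H t unfolding ham_sol_def by blast+
          show "(q' has_real_derivative Df 1 (p' t)) (at t within {ts-\<delta>..ts+\<delta>})"
            using hd(1) derivEm[OF pU] by simp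
          show "(p' has_real_derivative B 0 (q' t)) (at t within {ts-\<delta>..ts+\<delta>})"
            using hd(2) derivW by (simp add: B_def)
        qed
        show "\<forall>t\<in>{ts-\<delta>..ts+\<delta>}. q' t = qx t \<and> p' t = px t"
          by (rule ode_unique[where ts=ts and c="ts-\<delta>" and d="ts+\<delta>", OF U_open da ca lb _ _ s1 Ssub[OF sub1]]) (use d H qts pts in auto)
      qed
      show "\<exists>T0>ts+\<delta>. \<forall>T'. ts + \<delta> \<le> T' \<and> T' \<le> T0 \<longrightarrow>
           (\<exists>qn pn.
              (\<forall>t\<in>{ts<..T'}. pn t \<in> {0..2*pi}) \<and>
              ham_sol (bloch_band V n) W {ts<..T'} qn pn \<and>
              ((\<lambda>t. (qn t, pn t)) \<longlongrightarrow> (qs, ps)) (at_right ts) \<and>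
              (\<forall>t\<in>{ts<..T'}. bloch_gap V n (pn t) > 0) \<and>
              (\<forall>t\<in>{ts<..ts+\<delta>}. qx t = qn t \<and> px t = pn t) \<and>
              smooth_on {ts-\<delta>..T'}
                (\<lambda>t. if t \<le> ts + \<delta> then (qx t, px t) else (qn t, pn t)))"
      proof (intro exI[of _ "ts + h"] conjI allI impI)
        show "ts + h > ts + \<delta>" using d hpos by simp
        fix T' assume T': "ts + \<delta> \<le> T' \<and> T' \<le> ts + h"
        have sub2: "{ts<..T'} \<subseteq> {ts-h..ts+h}" using T' hpos by auto
        have sub3: "{ts-\<delta>..T'} \<subseteq> {ts-h..ts+h}" using T' d by auto
        show "\<exists>qn pn.
              (\<forall>t\<in>{ts<..T'}. pn t \<in> {0..2*pi}) \<and>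
              ham_sol (bloch_band V n) W {ts<..T'} qn pn \<and>
              ((\<lambda>t. (qn t, pn t)) \<longlongrightarrow> (qs, ps)) (at_right ts) \<and>
              (\<forall>t\<in>{ts<..T'}. bloch_gap V n (pn t) > 0) \<and>
              (\<forall>t\<in>{ts<..ts+\<delta>}. qx t = qn t \<and> px t = pn t) \<and>
              smooth_on {ts-\<delta>..T'}
                (\<lambda>t. if t \<le> ts + \<delta> then (qx t, px t) else (qn t, pn t))"
        proof (rule exI[of _ qx], rule exI[of _ px], intro conjI)
          show "\<forall>t\<in>{ts<..T'}. px t \<in> {0..2*pi}" using S sub2 U_sub by blast
          show "ham_sol (bloch_band V n) W {ts<..T'} qx px"
            unfolding ham_sol_def
          proof
            fix t assume t: "t \<in> {ts<..T'}"
            have pU: "px t \<in> U" using S sub2 t by blast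
            have pg: "px t > ps" using pinc t T' by auto
            show "(qx has_real_derivative deriv (bloch_band V n) (px t)) (at t within {ts<..T'}) \<and>
                  (px has_real_derivative - deriv W (qx t)) (at t within {ts<..T'})"
              using Ssub[OF sub2] t derivBn[OF pU pg] derivW by (simp add: B_def)
          qed
          show "((\<lambda>t. (qx t, px t)) \<longlongrightarrow> (qs, ps)) (at_right ts)" by (rule lim)
          show "\<forall>t\<in>{ts<..T'}. bloch_gap V n (px t) > 0"
          proof
            fix t assume t: "t \<in> {ts<..T'}"
            have pU: "px t \<in> U" using S sub2 t by blast
            have pg: "px t > ps" using pinc t T' by auto
            show "bloch_gap V n (px t) > 0" using gap[OF pU] pg by simp
          qed
          show "\<forall>t\<in>{ts<..ts+\<delta>}. qx t = qx t \<and> px t = px t" by simp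
          show "smooth_on {ts-\<delta>..T'} (\<lambda>t. if t \<le> ts + \<delta> then (qx t, px t) else (qx t, px t))"
            using smooth[OF sub3] by simp
        qed
      qed
    qed
  qed
qed

end
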